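(* As $N\to\infty$, $$R_N:=\sum_{n=1}^N\Big\{\frac{1}{2^{2n}}\binom{2n}{n}\Big\}^2=\frac{\log N+\alpha}{\pi}+o(1),\qquad\alpha:=\gamma+\log16-\pi,$$ where $\gamma$ is the Euler–Mascheroni constant.
   Context: $\gamma=-\int_0^\infty\log u\,e^{-u}\mathrm du$. *)

theory Defs
  imports "HOL-Analysis.Analysis"
begin

end

theory Submission
  imports Defs "HOL-Real_Asymp.Real_Asymp"
begin

definition ca :: "nat \<Rightarrow> real" where "ca n = real ((2*n) choose n) / 2^(2*n)"

lemma cb_fact: "real ((2*n) choose n) * (fact n * fact n) = fact (2*n)"
proof -
  have "fact n * fact (2*n - n) * ((2*n) choose n) = (fact (2*n)::nat)"
    by (rule binomial_fact_lemma) simp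
  moreover have "2*n - n = n" by simp
  ultimately have "fact n * fact n * ((2*n) choose n) = (fact (2*n)::nat)" by metis
  hence "real (fact n * fact n * ((2*n) choose n)) = real (fact (2*n))" by metis
  thus ?thesis by (simp only: of_nat_mult of_nat_fact mult.commute)
qed

lemma ca_Suc: "ca (Suc n) = ca n * ((2*real n+1)/(2*real n+2))"
proof -
  define c' where "c' = real ((2*Suc n) choose Suc n)"
  define c where "c = real ((2*n) choose n)"
  define f where "f = (fact n :: real)"
  have f1: "(fact (Suc n)::real) = (real n+1) * f" by (simp add: algebra_simps f_def)
  have f2: "(fact (2*Suc n)::real) = (2*real n+2)*(2*real n+1) * (fact (2*n)::real)"
    by (simp add: algebra_simps)
  have E1: "c' * ((real n+1) * f * ((real n+1) * f)) = (2*real n+2)*(2*real n+1) * (fact (2*n)::real)"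
    using cb_fact[of "Suc n", folded c'_def] unfolding f1 f2 .
  have E2: "c * (f*f) = fact (2*n)" using cb_fact[of n, folded c_def] unfolding f_def .
  have "f > 0" unfolding f_def by simp
  have "(c' * (real n+1)^2 - (2*real n+2)*(2*real n+1) * c) * (f*f) = 0" using E1 E2 by algebra
  hence "c' * (real n+1)^2 = (2*real n+2)*(2*real n+1) * c" using \<open>f > 0\<close> by simp
  hence "(c' * (real n+1) - 2*(2*real n+1)*c) * (real n+1) = 0" by algebra
  hence "c' * (real n+1) = 2*(2*real n+1)*c" by simp
  hence c'e: "c' = 2*(2*real n+1)*c / (real n+1)" by (simp add: eq_divide_eq)
  have p: "(2::real)^(2*Suc n) = 4 * 2^(2*n)" by (simp add: power_add)
  have gen: "\<And>m D c::real. m \<noteq> 0 \<Longrightarrow> D \<noteq> 0 \<Longrightarrow> 2*(2*m-1)*c/m/(4*D) = c/D*((2*m-1)/(2*m))"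
    by (simp add: field_simps)
  have "real n + 1 \<noteq> 0" "(2::real)^(2*n) \<noteq> 0" by auto
  from gen[OF this, of c] show ?thesis unfolding ca_def c_def[symmetric] c'_def[symmetric] c'e p
    by (simp add: algebra_simps)
qed

lemma ca_pos: "ca n > 0" unfolding ca_def by simp

lemma ca_0: "ca 0 = 1" unfolding ca_def by simp

lemma ca_Suc_sq: "ca (Suc n)^2 = ca n^2 * ((2*real n+1)/(2*real n+2))^2"
  unfolding ca_Suc by (simp only: power_mult_distrib)

lemma wallis_ca: "(2*real n+1) * ca n^2 * (\<Prod>k=1..n. (4*real k^2) / (4*real k^2 - 1)) = 1"
proof (induction n)
  case 0 thus ?case by (simp add: ca_0)
next
  case (Suc n)
  define P where "P = (\<Prod>k=1..n. (4*real k^2) / (4*real k^2 - 1))"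
  define t where "t = (4*real (Suc n)^2) / (4*real (Suc n)^2 - 1)"
  define r where "r = (2*real n+1)/(2*real n+2)"
  define A where "A = ca n^2"
  have PS: "(\<Prod>k=1..Suc n. (4*real k^2) / (4*real k^2 - 1)) = P * t"
    unfolding P_def t_def by (simp add: prod.nat_ivl_Suc' mult.commute)
  have t': "t = (2*real n+2)^2 / ((2*real n+1)*(2*real n+3))"
    unfolding t_def by (simp add: power2_eq_square algebra_simps)
  have key: "(2*real n+3) * r^2 * t = 2*real n+1"
    proof -
    have gen: "\<And>a b c::real. a\<noteq>0 \<Longrightarrow> b\<noteq>0 \<Longrightarrow> c\<noteq>0 \<Longrightarrow> c*(a/b)^2*(b^2/(a*c)) = a"
      by (simp add: field_simps power2_eq_square)
    have "2*real n+1 \<noteq> 0" "2*real n+2 \<noteq> 0" "2*real n+3 \<noteq> 0" by auto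
    from gen[OF this] show ?thesis unfolding r_def t' .
  qed
  have "(2*real (Suc n)+1) * ca (Suc n)^2 * (\<Prod>k=1..Suc n. (4*real k^2) / (4*real k^2 - 1))
      = (2*real n+3) * (A*r^2) * (P*t)"
    unfolding PS ca_Suc_sq A_def r_def by (simp add: algebra_simps)
  also have "\<dots> = A*P*((2*real n+3) * r^2 * t)" by (simp add: mult_ac)
  also have "\<dots> = (2*real n+1) * A * P" unfolding key by (simp add: mult_ac)
  also have "\<dots> = 1" using Suc unfolding A_def P_def by simp
  finally show ?case .
qed

lemma u_lim: "(\<lambda>n. (2*real n+1) * (pi * ca n^2)) \<longlonglongrightarrow> 2"
proof -
  have "(\<lambda>n. pi / (\<Prod>k=1..n. (4*real k^2) / (4*real k^2 - 1))) \<longlonglongrightarrow> pi / (pi/2)"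
    by (intro tendsto_intros wallis) simp
  also have "(\<lambda>n. pi / (\<Prod>k=1..n. (4*real k^2) / (4*real k^2 - 1))) = (\<lambda>n. (2*real n+1) * (pi * ca n^2))"
  proof
    fix n
    define P where "P = (\<Prod>k=1..n. (4*real k^2) / (4*real k^2 - 1))"
    have W: "(2*real n+1) * ca n^2 * P = 1" using wallis_ca[of n] unfolding P_def .
    hence "P \<noteq> 0" by auto
    hence "(2*real n+1) * ca n^2 = 1 / P" using W by (simp add: eq_divide_eq)
    hence "pi / P = (2*real n+1) * (pi * ca n^2)" by (simp add: field_simps)
    thus "pi / (\<Prod>k=1..n. (4*real k^2) / (4*real k^2 - 1)) = (2*real n+1) * (pi * ca n^2)"
      unfolding P_def .
  qed
  finally show ?thesis by simp
qed

lemma p_lower: "2 / (2*real n+1) \<le> pi * ca n^2"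
proof -
  have "decseq (\<lambda>n. (2*real n+1) * (pi * ca n^2))"
  proof (rule decseq_SucI)
    fix n
    have "(2*real n+3) * (2*real n+1)^2 \<le> (2*real n+1) * (2*real n+2)^2" by (simp add: power2_eq_square algebra_simps)
    hence "(2*real n+3) * ((2*real n+1)/(2*real n+2))^2 \<le> (2*real n+1)"
      by (simp add: power_divide field_simps)
    hence "(2*real n+3) * ((2*real n+1)/(2*real n+2))^2 * (pi * ca n^2) \<le> (2*real n+1) * (pi * ca n^2)"
      by (intro mult_right_mono) auto
    moreover have "(2 * real (Suc n) + 1) * (pi * ca (Suc n)^2) = (2*real n+3) * ((2*real n+1)/(2*real n+2))^2 * (pi * ca n^2)"
      unfolding ca_Suc_sq by (simp add: algebra_simps)
    ultimately show "(2 * real (Suc n) + 1) * (pi * ca (Suc n)^2) \<le> (2*real n+1) * (pi * ca n^2)"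
      by simp
  qed
  from decseq_ge[OF this u_lim, of n] show ?thesis by (simp add: field_simps)
qed

lemma p_upper: "pi * ca (Suc n)^2 \<le> 1 / (real n+1)"
proof -
  have "incseq (\<lambda>n. (2*real n+2) * (pi * ca (Suc n)^2))"
  proof (rule incseq_SucI)
    fix n
    have "(2*real n+2) * (2*real n+4)^2 \<le> (2*real n+4) * (2*real n+3)^2" by (simp add: power2_eq_square algebra_simps)
    hence "(2*real n+2) \<le> (2*real n+4) * ((2*real n+3)/(2*real n+4))^2"
      by (simp add: power_divide field_simps)
    hence "(2*real n+2) * (pi * ca (Suc n)^2) \<le> (2*real n+4) * ((2*real n+3)/(2*real n+4))^2 * (pi * ca (Suc n)^2)"
      by (intro mult_right_mono) auto
    also have "\<dots> = (2 * real (Suc n) + 2) * (pi * ca (Suc (Suc n))^2)"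
      unfolding ca_Suc_sq[of "Suc n"] by (simp add: algebra_simps)
    finally show "(2*real n+2) * (pi * ca (Suc n)^2) \<le> (2 * real (Suc n) + 2) * (pi * ca (Suc (Suc n))^2)" .
  qed
  moreover have "(\<lambda>n. (2*real n+2) * (pi * ca (Suc n)^2)) \<longlonglongrightarrow> 2"
  proof -
    have L1: "(\<lambda>n. (2*real n+2)/(2*real n+3)) \<longlonglongrightarrow> 1" by real_asymp
    have L2: "(\<lambda>n. (2*real (Suc n)+1) * (pi * ca (Suc n)^2)) \<longlonglongrightarrow> 2"
      using LIMSEQ_Suc[OF u_lim] by simp
    have "(\<lambda>n. (2*real n+2)/(2*real n+3) * ((2*real (Suc n)+1) * (pi * ca (Suc n)^2))) \<longlonglongrightarrow> 1 * 2"
      by (rule tendsto_mult[OF L1 L2])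
    moreover have "(\<lambda>n. (2*real n+2)/(2*real n+3) * ((2*real (Suc n)+1) * (pi * ca (Suc n)^2)))
       = (\<lambda>n. (2*real n+2) * (pi * ca (Suc n)^2))"
      by (rule ext) (simp add: field_simps)
    ultimately show ?thesis by simp
  qed
  ultimately have "(2*real n+2) * (pi * ca (Suc n)^2) \<le> 2" using incseq_le by fastforce
  thus ?thesis by (simp add: field_simps)
qed

lemma sin_pow_integral: "((\<lambda>t. sin t ^ (2*n)) has_integral (pi/2 * ca n)) {0..pi/2}"
proof (induction n)
  case 0 thus ?case using has_integral_const_real[where c="1::real" and a=0 and b="pi/2"] by (simp add: ca_0 real_scaleR_def)
next
  case (Suc n)
  define F where "F = (\<lambda>t::real. - (sin t ^ (2*n+1) * cos t))"
  define F' where "F' = (\<lambda>t::real. (2*real n+2) * sin t ^ (2*n+2) - (2*real n+1) * sin t ^ (2*n))"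
  have D: "(F has_vector_derivative F' t) (at t within {0..pi/2})" for t
  proof -
    have "(F has_real_derivative (- (real (2*n+1) * sin t ^ (2*n) * cos t * cos t + sin t ^ (2*n+1) * (- sin t)))) (at t)"
      unfolding F_def by (auto intro!: derivative_eq_intros simp del: power_Suc)
    moreover have "- (real (2*n+1) * sin t ^ (2*n) * cos t * cos t + sin t ^ (2*n+1) * (- sin t)) = F' t"
    proof -
      have c: "cos t * cos t = 1 - sin t ^ 2" using sin_cos_squared_add[of t] by (simp add: power2_eq_square)
      have "- (real (2*n+1) * sin t ^ (2*n) * cos t * cos t + sin t ^ (2*n+1) * (- sin t))
          = - (real (2*n+1) * sin t ^ (2*n) * (cos t * cos t) - sin t ^ (2*n) * sin t ^ 2)"
        by (simp add: power_add power2_eq_square algebra_simps)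
      also have "\<dots> = F' t" unfolding c F'_def by (simp add: power_add power2_eq_square algebra_simps)
      finally show ?thesis .
    qed
    ultimately show ?thesis
      by (simp add: has_real_derivative_iff_has_vector_derivative has_vector_derivative_at_within)
  qed
  have I1: "(F' has_integral (F (pi/2) - F 0)) {0..pi/2}"
    by (rule fundamental_theorem_of_calculus) (use D in auto)
  have F0: "F (pi/2) - F 0 = 0" unfolding F_def by simp
  have I2: "((\<lambda>t. (2*real n+1) * sin t ^ (2*n)) has_integral ((2*real n+1) * (pi/2 * ca n))) {0..pi/2}"
    by (rule has_integral_mult_right[OF Suc])
  have I3: "((\<lambda>t. F' t + (2*real n+1) * sin t ^ (2*n)) has_integral (0 + (2*real n+1) * (pi/2 * ca n))) {0..pi/2}"
    by (rule has_integral_add[OF I1[unfolded F0] I2])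
  have I4: "((\<lambda>t. (1/(2*real n+2)) * (F' t + (2*real n+1) * sin t ^ (2*n))) has_integral ((1/(2*real n+2)) * (0 + (2*real n+1) * (pi/2 * ca n)))) {0..pi/2}"
    by (rule has_integral_mult_right[OF I3])
  have e1: "(\<lambda>t. (1/(2*real n+2)) * (F' t + (2*real n+1) * sin t ^ (2*n))) = (\<lambda>t. sin t ^ (2 * Suc n))"
    unfolding F'_def by (rule ext) (simp add: field_simps)
  have e2: "(1/(2*real n+2)) * (0 + (2*real n+1) * (pi/2 * ca n)) = pi/2 * ca (Suc n)"
    unfolding ca_Suc by (simp add: field_simps)
  show ?case using I4 unfolding e1 e2 .
qed

lemma ca_gchoose: "ca n = (-1)^n * ((-1/2::real) gchoose n)"
proof (induction n)
  case 0 thus ?case by (simp add: ca_0)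
next
  case (Suc n)
  have "(-1/2::real) * ((-1/2) gchoose n) = n * ((-1/2) gchoose n) + real (Suc n) * ((-1/2) gchoose Suc n)"
    by (rule gbinomial_mult_1)
  hence "((-1/2::real) gchoose Suc n) * (2*real n+2) = -(2*real n+1) * ((-1/2) gchoose n)"
    by (simp add: algebra_simps)
  hence G: "((-1/2::real) gchoose Suc n) = -((2*real n+1)/(2*real n+2)) * ((-1/2) gchoose n)"
    by (simp add: field_simps)
  define G0 where "G0 = ((-1/2::real) gchoose n)"
  define r where "r = (2*real n+1)/(2*real n+2)"
  have "ca (Suc n) = (-1)^n * G0 * r" unfolding ca_Suc Suc G0_def r_def by simp
  also have "\<dots> = (-1)^Suc n * (- r * G0)" by simp
  finally show ?case unfolding G G0_def r_def .
qed

lemma ca_series: "\<bar>z\<bar> < 1 \<Longrightarrow> (\<lambda>n. ca n * z^n) sums (1 / sqrt (1 - z))"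
proof -
  assume z: "\<bar>z\<bar> < 1"
  have "\<bar>-z\<bar> < 1" using z by simp
  from gen_binomial_real[OF this, of "-1/2"]
  have S: "(\<lambda>n. ((-1/2) gchoose n) * (-z)^n) sums ((1 + -z) powr (-1/2))" .
  have E1: "(\<lambda>n. ((-1/2) gchoose n) * (-z)^n) = (\<lambda>n. ca n * z^n)"
  proof
    fix n
    have "(-z)^n = (-1)^n * z^n" by (rule power_minus)
    thus "((-1/2) gchoose n) * (-z)^n = ca n * z^n" unfolding ca_gchoose[of n] by (simp only: mult_ac)
  qed
  have E2: "(1 + -z) powr (-1/2) = 1 / sqrt (1 - z)"
  proof -
    have "(1 + -z) powr (-1/2) = (1-z) powr (-(1/2))" by simp
    also have "\<dots> = inverse ((1-z) powr (1/2))" by (rule powr_minus)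
    also have "(1-z) powr (1/2) = sqrt (1-z)" using z by (intro powr_half_sqrt) simp
    finally show ?thesis by (simp only: inverse_eq_divide)
  qed
  show ?thesis using S unfolding E1 E2 .
qed

lemma sin_sq_le1: "sin t ^ 2 \<le> (1::real)"
  using sin_cos_squared_add[of t] zero_le_power2[of "cos t"] by linarith

lemma S_eq:
  fixes x :: real
  assumes x0: "0 \<le> x" and x1: "x < 1"
  shows "(\<lambda>n. pi * ca n^2 * x^n) sums (2 * integral {0..pi/2} (\<lambda>t. 1/sqrt(1 - x * sin t ^ 2)))"
proof -
  define g where "g = (\<lambda>t::real. 1/sqrt(1 - x * sin t ^ 2))"
  define f where "f = (\<lambda>k t. \<Sum>n<k. ca n * x^n * sin t^(2*n))"
  have zs: "(\<lambda>n. ca n * x^n * sin t^(2*n)) sums g t" for t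
  proof -
    have "0 \<le> x * sin t ^ 2" using x0 by simp
    moreover have "x * sin t ^ 2 \<le> x" using x0 by (simp add: mult_left_le sin_sq_le1)
    ultimately have "\<bar>x * sin t ^ 2\<bar> < 1" using x1 by simp
    from ca_series[OF this] show ?thesis unfolding g_def
      by (simp add: power_mult_distrib power_mult mult.assoc)
  qed
  have conv: "(\<lambda>k. f k t) \<longlonglongrightarrow> g t" for t
    using zs[of t] unfolding f_def sums_def .
  have gb: "g t \<le> 1/sqrt(1-x)" for t
  proof -
    have "x * sin t ^ 2 \<le> x" using x0 by (simp add: mult_left_le sin_sq_le1)
    hence "sqrt (1-x) \<le> sqrt (1 - x * sin t ^ 2)" by simp
    moreover have "sqrt (1-x) > 0" using x1 by simp
    ultimately show ?thesis unfolding g_def by (simp add: frac_le)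
  qed
  have fb: "norm (f k t) \<le> 1/sqrt(1-x)" for k t
  proof -
    have nn: "0 \<le> ca n * x^n * sin t^(2*n)" for n
      using ca_pos[of n] x0 by (simp add: power_mult)
    have "f k t \<ge> 0" unfolding f_def by (intro sum_nonneg nn)
    moreover have "f k t \<le> g t" unfolding f_def
      using sum_le_suminf[OF sums_summable[OF zs[of t]], of "{..<k}"] nn sums_unique[OF zs[of t]] by simp
    ultimately show ?thesis using gb[of t] by simp
  qed
  have fi: "(f k has_integral (\<Sum>n<k. ca n * x^n * (pi/2 * ca n))) {0..pi/2}" for k
    unfolding f_def
    by (intro has_integral_sum finite_lessThan has_integral_mult_right sin_pow_integral)
  have lim: "(\<lambda>k. integral {0..pi/2} (f k)) \<longlonglongrightarrow> integral {0..pi/2} g"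
    by (rule dominated_convergence(2)[where h="\<lambda>_. 1/sqrt(1-x)"])
       (use fi fb conv in \<open>auto simp: integrable_on_def\<close>)
  have "(\<lambda>k. integral {0..pi/2} (f k)) = (\<lambda>k. \<Sum>n<k. pi/2 * ca n^2 * x^n)"
    using fi by (intro ext) (simp add: integral_unique power2_eq_square mult_ac)
  with lim have "(\<lambda>n. pi/2 * ca n^2 * x^n) sums integral {0..pi/2} g"
    unfolding sums_def by simp
  from sums_mult[OF this, of 2] show ?thesis unfolding g_def by (simp add: mult_ac)
qed

lemma sin_sq_le1': "sin t ^ 2 \<le> (1::real)"
  using sin_cos_squared_add[of t] zero_le_power2[of "cos t"] by linarith

lemma lim_A: "(\<lambda>k::nat. 2*((ln(1+sqrt(1 - 1/(real k+2))) - ln(sqrt(1-(1 - 1/(real k+2)))))/sqrt(1 - 1/(real k+2))) + ln(1-(1 - 1/(real k+2)))) \<longlonglongrightarrow> 2 * ln 2"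
  by real_asymp

lemma A_closed:
  fixes w :: real
  assumes w0: "0 < w" and w1: "w < 1"
  shows "((\<lambda>t. sin t / sqrt(1 - w^2 * sin t ^ 2)) has_integral ((ln(1+w) - ln(sqrt(1-w^2)))/w)) {0..pi/2}"
proof -
  define F where "F = (\<lambda>t. - ln(w * cos t + sqrt(1 - w^2 * sin t ^ 2)) / w)"
  have pos: "1 - w^2 * sin t ^ 2 > 0" for t
  proof -
    have "w^2 * sin t ^ 2 \<le> w^2 * 1" using sin_sq_le1'[of t]
      by (intro mult_left_mono) auto
    moreover have "w^2 < 1" using w0 w1 by (simp add: power_less_one_iff abs_less_iff)
    ultimately show ?thesis by simp
  qed
  have D: "(F has_vector_derivative (sin t / sqrt(1 - w^2 * sin t ^ 2))) (at t within {0..pi/2})"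
    if t: "t \<in> {0..pi/2}" for t
  proof -
    have c: "cos t \<ge> 0" using t by (intro cos_ge_zero) auto
    define s where "s = sqrt(1 - w^2 * sin t ^ 2)"
    have s0: "s > 0" unfolding s_def using pos[of t] by simp
    have i0: "w * cos t + s > 0" using s0 c w0 by (simp add: add_nonneg_pos)
    have d1: "((\<lambda>t. 1 - w^2 * sin t ^ 2) has_real_derivative (0 - w^2 * (of_nat 2 * (cos t * sin t ^ (2 - Suc 0))))) (at t)"
      by (intro DERIV_diff DERIV_const DERIV_cmult DERIV_power DERIV_sin)
    have d2: "((\<lambda>t. sqrt (1 - w^2 * sin t ^ 2)) has_real_derivative (inverse s / 2 * (0 - w^2 * (of_nat 2 * (cos t * sin t ^ (2 - Suc 0)))))) (at t)"
      using DERIV_chain2[OF DERIV_real_sqrt[OF pos[of t]] d1] unfolding s_def .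
    have d4: "((\<lambda>t. w * cos t + sqrt (1 - w^2 * sin t ^ 2)) has_real_derivative (w * - sin t + inverse s / 2 * (0 - w^2 * (of_nat 2 * (cos t * sin t ^ (2 - Suc 0)))))) (at t)"
      by (intro DERIV_add d2 DERIV_cmult DERIV_cos)
    have d5: "((\<lambda>t. ln (w * cos t + sqrt (1 - w^2 * sin t ^ 2))) has_real_derivative (inverse (w * cos t + s) * (w * - sin t + inverse s / 2 * (0 - w^2 * (of_nat 2 * (cos t * sin t ^ (2 - Suc 0))))))) (at t)"
      using DERIV_chain2[OF DERIV_ln[OF i0[unfolded s_def]] d4] unfolding s_def .
    have d6: "(F has_real_derivative ((- (inverse (w * cos t + s) * (w * - sin t + inverse s / 2 * (0 - w^2 * (of_nat 2 * (cos t * sin t ^ (2 - Suc 0))))))) / w)) (at t)"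
      unfolding F_def using DERIV_cdivide[OF DERIV_minus[OF d5]] .
    have eq: "((- (inverse (w * cos t + s) * (w * - sin t + inverse s / 2 * (0 - w^2 * (of_nat 2 * (cos t * sin t ^ (2 - Suc 0))))))) / w) = sin t / s"
    proof -
      define i where "i = w * cos t + s"
      have i0': "i \<noteq> 0" "s \<noteq> 0" "w \<noteq> 0" using i0 s0 w0 unfolding i_def by auto
      have inner: "w * - sin t + inverse s / 2 * (0 - w^2 * (of_nat 2 * (cos t * sin t ^ (2 - Suc 0)))) = - w * sin t * i / s"
        using i0' unfolding i_def by (simp add: field_simps power2_eq_square)
      show ?thesis unfolding inner i_def[symmetric] using i0' by (simp add: field_simps)
    qed
    have "(F has_real_derivative (sin t / s)) (at t)" using d6 unfolding eq .
    thus ?thesis unfolding s_def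
      by (simp add: has_real_derivative_iff_has_vector_derivative has_vector_derivative_at_within)
  qed
  have "((\<lambda>t. sin t / sqrt(1 - w^2 * sin t ^ 2)) has_integral (F (pi/2) - F 0)) {0..pi/2}"
    by (rule fundamental_theorem_of_calculus) (use D in auto)
  moreover have "F (pi/2) - F 0 = (ln(1+w) - ln(sqrt(1-w^2)))/w"
    unfolding F_def by (simp add: diff_divide_distrib add.commute)
  ultimately show ?thesis by simp
qed

lemma sin_sq_le1'': "sin t ^ 2 \<le> (1::real)"
  using sin_cos_squared_add[of t] zero_le_power2[of "cos t"] by linarith

lemma pos_den: "0 \<le> x \<Longrightarrow> x < 1 \<Longrightarrow> 1 - x * sin t ^ 2 > (0::real)"
proof -
  assume "0 \<le> x" "x < 1"
  hence "x * sin t ^ 2 \<le> x * 1" by (intro mult_left_mono sin_sq_le1'')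
  with \<open>x < 1\<close> show ?thesis by simp
qed

lemma int_g: "((\<lambda>t. cos t / (1 + sin t)) has_integral ln 2) {0..pi/2}"
proof -
  have D: "((\<lambda>t. ln (1 + sin t)) has_vector_derivative (cos t / (1 + sin t))) (at t within {0..pi/2})"
    if "t \<in> {0..pi/2}" for t
  proof -
    have "sin t \<ge> 0" using that by (intro sin_ge_zero) auto
    hence p: "1 + sin t > 0" by simp
    have d: "((\<lambda>t. 1 + sin t) has_real_derivative (0 + cos t)) (at t)"
      by (intro DERIV_add DERIV_const DERIV_sin)
    have "((\<lambda>t. ln (1 + sin t)) has_real_derivative (inverse (1 + sin t) * (0 + cos t))) (at t)"
      using DERIV_chain2[OF DERIV_ln[OF p] d] .
    moreover have "inverse (1 + sin t) * (0 + cos t) = cos t / (1 + sin t)" by (simp add: divide_inverse)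
    ultimately have "((\<lambda>t. ln (1 + sin t)) has_real_derivative (cos t / (1 + sin t))) (at t)" by simp
    thus ?thesis
      by (simp add: has_real_derivative_iff_has_vector_derivative has_vector_derivative_at_within)
  qed
  have "((\<lambda>t. cos t / (1 + sin t)) has_integral (ln (1 + sin (pi/2)) - ln (1 + sin 0))) {0..pi/2}"
    by (rule fundamental_theorem_of_calculus) (use D in auto)
  moreover have "ln (1 + sin (pi/2)) - ln (1 + sin 0) = ln (2::real)" by simp
  ultimately show ?thesis by simp
qed

lemma B_lim:
  fixes X :: "nat \<Rightarrow> real"
  assumes X: "\<And>k. 0 \<le> X k \<and> X k < 1" and XL: "X \<longlonglongrightarrow> 1"
  shows "(\<lambda>k. integral {0..pi/2} (\<lambda>t. (1 - sin t)/sqrt(1 - X k * sin t ^ 2))) \<longlonglongrightarrow> ln 2"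
proof -
  have ig: "integral {0..pi/2} (\<lambda>t. cos t / (1 + sin t)) = ln 2" using int_g by (rule integral_unique)
  have "(\<lambda>k. integral {0..pi/2} (\<lambda>t. (1 - sin t)/sqrt(1 - X k * sin t ^ 2))) \<longlonglongrightarrow> integral {0..pi/2} (\<lambda>t. cos t / (1 + sin t))"
  proof (rule dominated_convergence(2)[where h="\<lambda>_. 1"])
    fix k
    show "(\<lambda>t. (1 - sin t)/sqrt(1 - X k * sin t ^ 2)) integrable_on {0..pi/2}"
    proof (rule integrable_continuous_interval)
      show "continuous_on {0..pi/2} (\<lambda>t. (1 - sin t)/sqrt(1 - X k * sin t ^ 2))"
      proof -
        have nz: "X k * sin t ^ 2 \<noteq> 1" for t using pos_den[of "X k" t] X[of k] by simp
        show ?thesis by (intro continuous_intros) (use nz in auto)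
      qed
    qed
  next
    show "(\<lambda>_. 1::real) integrable_on {0..pi/2}"
      by (rule integrable_continuous_interval) (rule continuous_on_const)
  next
    fix k t assume t: "t \<in> {0..pi/2}"
    define s where "s = sin t"
    have s0: "0 \<le> s" unfolding s_def using t by (intro sin_ge_zero) auto
    have s1: "s \<le> 1" unfolding s_def by simp
    have q: "0 < sqrt(1 - X k * s^2)" using pos_den[of "X k" t] X[of k] unfolding s_def by simp
    have "s * s \<le> 1 * s" using s0 s1 by (intro mult_right_mono) auto
    moreover have "X k * s^2 \<le> 1 * s^2" using X[of k] by (intro mult_right_mono) auto
    ultimately have "(1-s)^2 \<le> 1 - X k * s^2" by (simp add: power2_eq_square algebra_simps)
    hence "1 - s \<le> sqrt(1 - X k * s^2)" by (rule real_le_rsqrt)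
    hence "(1 - s)/sqrt(1 - X k * s^2) \<le> 1" using q by simp
    moreover have "0 \<le> (1 - s)/sqrt(1 - X k * s^2)" using q s1 by simp
    ultimately show "norm ((1 - sin t)/sqrt(1 - X k * sin t ^ 2)) \<le> 1" unfolding s_def by simp
  next
    fix t :: real assume t: "t \<in> {0..pi/2}"
    have c0: "cos t \<ge> 0" using t by (intro cos_ge_zero) auto
    have s0: "sin t \<ge> 0" using t by (intro sin_ge_zero) auto
    show "(\<lambda>k. (1 - sin t)/sqrt(1 - X k * sin t ^ 2)) \<longlonglongrightarrow> cos t / (1 + sin t)"
    proof (cases "cos t = 0")
      case True
      hence "sin t ^ 2 = 1" using sin_cos_squared_add[of t] by simp
      hence "sin t = 1" using s0 by (simp add: power2_eq_1_iff)
      thus ?thesis using True by simp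
    next
      case False
      hence cp: "cos t > 0" using c0 by simp
      have e: "1 - 1 * sin t ^ 2 = cos t ^ 2" by (simp add: cos_squared_eq)
      have "(\<lambda>k. (1 - sin t)/sqrt(1 - X k * sin t ^ 2)) \<longlonglongrightarrow> (1 - sin t)/sqrt(1 - 1 * sin t ^ 2)"
        using cp by (intro tendsto_intros XL) (simp add: cos_squared_eq[symmetric])
      also have "(1 - sin t)/sqrt(1 - 1 * sin t ^ 2) = cos t / (1 + sin t)"
      proof -
        have "sqrt(1 - 1 * sin t ^ 2) = cos t" unfolding e using c0 by simp
        moreover have "(1 - sin t) * (1 + sin t) = cos t * cos t"
          using sin_cos_squared_add[of t] by (simp add: power2_eq_square algebra_simps)
        moreover have "1 + sin t \<noteq> 0" using s0 by simp
        ultimately show ?thesis using cp by (simp add: field_simps)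
      qed
      finally show ?thesis .
    qed
  qed
  thus ?thesis unfolding ig .
qed

definition dd :: "nat \<Rightarrow> real" where "dd n = pi * ca (Suc n)^2 - 1/(real n+1)"

lemma dd_nonpos: "dd n \<le> 0"
  using p_upper[of n] unfolding dd_def by simp

lemma dd_lower: "- (1/(real n+1)^2) \<le> dd n"
proof -
  have "2 / (2*real (Suc n)+1) \<le> pi * ca (Suc n)^2" by (rule p_lower)
  moreover have "2 / (2*real (Suc n)+1) - 1/(real n+1) = - (1/((2*real n+3)*(real n+1)))"
    by (simp add: field_simps)
  moreover have "1/((2*real n+3)*(real n+1)) \<le> 1/(real n+1)^2"
    by (intro divide_left_mono) (auto simp: power2_eq_square intro!: mult_right_mono mult_pos_pos)
  ultimately show ?thesis unfolding dd_def by linarith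
qed

lemma dd_summable: "summable dd"
proof (rule summable_comparison_test')
  have "summable (\<lambda>n. inverse (of_nat n ^ 2 :: real))" by (rule inverse_power_summable) simp
  hence "summable (\<lambda>n. inverse (of_nat (Suc n) ^ 2 :: real))" by (subst summable_Suc_iff)
  moreover have "(\<lambda>n. inverse (of_nat (Suc n) ^ 2 :: real)) = (\<lambda>n. 1/(real n+1)^2)"
    by (rule ext) (simp only: inverse_eq_divide of_nat_Suc add.commute)
  ultimately show "summable (\<lambda>n. 1/(real n+1)^2)" by simp
  fix n
  have "norm (dd n) = - dd n" using dd_nonpos[of n] by simp
  thus "norm (dd n) \<le> 1/(real n+1)^2" using dd_lower[of n] by linarith
qed

definition JJ :: "real \<Rightarrow> real" where
  "JJ x = 2 * integral {0..pi/2} (\<lambda>t. 1/sqrt(1 - x * sin t ^ 2))"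

lemma G_sums:
  assumes x0: "0 \<le> x" and x1: "x < 1"
  shows "(\<lambda>n. dd n * x^(Suc n)) sums (JJ x - pi + ln(1-x))"
proof -
  have S: "(\<lambda>n. pi * ca n^2 * x^n) sums JJ x" unfolding JJ_def by (rule S_eq[OF x0 x1])
  have S1: "(\<lambda>n. pi * ca (Suc n)^2 * x^(Suc n)) sums (JJ x - pi)"
    using S by (subst sums_Suc_iff) (simp add: ca_0)
  have "\<bar>-x\<bar> < 1" using x0 x1 by simp
  from ln_series'[OF this] have "(\<lambda>n. - (x^n) / of_nat n) sums ln(1 - x)" by simp
  hence L1: "(\<lambda>n. - (x^(Suc n)) / of_nat (Suc n)) sums ln(1 - x)"
    by (subst sums_Suc_iff) simp
  from sums_add[OF S1 L1] have "(\<lambda>n. pi * ca (Suc n)^2 * x^(Suc n) + - (x^(Suc n)) / of_nat (Suc n)) sums (JJ x - pi + ln(1-x))" .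
  moreover have "(\<lambda>n. pi * ca (Suc n)^2 * x^(Suc n) + - (x^(Suc n)) / of_nat (Suc n)) = (\<lambda>n. dd n * x^(Suc n))"
    by (rule ext) (simp add: dd_def left_diff_distrib add.commute)
  ultimately show ?thesis by simp
qed

lemma B_integrable:
  assumes "0 \<le> x" "x < 1"
  shows "(\<lambda>t. (1 - sin t)/sqrt(1 - x * sin t ^ 2)) integrable_on {0..pi/2}"
proof (rule integrable_continuous_interval)
  have nz: "x * sin t ^ 2 \<noteq> 1" for t using pos_den[of x t] assms by simp
  show "continuous_on {0..pi/2} (\<lambda>t. (1 - sin t)/sqrt(1 - x * sin t ^ 2))"
    by (intro continuous_intros) (use nz in auto)
qed

lemma JJ_split:
  assumes x0: "0 < x" and x1: "x < 1"
  shows "JJ x = 2*((ln(1+sqrt x) - ln(sqrt(1-x)))/sqrt x) + 2*integral {0..pi/2} (\<lambda>t. (1-sin t)/sqrt(1 - x * sin t ^ 2))"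
proof -
  define w where "w = sqrt x"
  have w0: "0 < w" "w < 1" unfolding w_def using x0 x1 by auto
  have w2: "w^2 = x" unfolding w_def using x0 by simp
  have IA: "((\<lambda>t. sin t / sqrt(1 - x * sin t ^ 2)) has_integral ((ln(1+w) - ln(sqrt(1-x)))/w)) {0..pi/2}"
    using A_closed[OF w0] unfolding w2 .
  have IB: "((\<lambda>t. (1-sin t)/sqrt(1 - x * sin t ^ 2)) has_integral integral {0..pi/2} (\<lambda>t. (1-sin t)/sqrt(1 - x * sin t ^ 2))) {0..pi/2}"
    using B_integrable[of x] x0 x1 by (simp add: has_integral_integral)
  from has_integral_add[OF IA IB]
  have "((\<lambda>t. sin t / sqrt(1 - x * sin t ^ 2) + (1-sin t)/sqrt(1 - x * sin t ^ 2)) has_integral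
     ((ln(1+w) - ln(sqrt(1-x)))/w + integral {0..pi/2} (\<lambda>t. (1-sin t)/sqrt(1 - x * sin t ^ 2)))) {0..pi/2}" .
  moreover have "(\<lambda>t. sin t / sqrt(1 - x * sin t ^ 2) + (1-sin t)/sqrt(1 - x * sin t ^ 2)) = (\<lambda>t. 1/sqrt(1 - x * sin t ^ 2))"
    by (rule ext) (simp add: add_divide_distrib[symmetric])
  ultimately have "integral {0..pi/2} (\<lambda>t. 1/sqrt(1 - x * sin t ^ 2)) = (ln(1+w) - ln(sqrt(1-x)))/w + integral {0..pi/2} (\<lambda>t. (1-sin t)/sqrt(1 - x * sin t ^ 2))"
    by (simp add: integral_unique)
  thus ?thesis unfolding JJ_def w_def by simp
qed

definition XX :: "nat \<Rightarrow> real" where "XX k = 1 - 1/(real k + 2)"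

lemma XX_props: "0 < XX k" "XX k < 1"
  unfolding XX_def by (auto simp: field_simps)

lemma XX_lim: "XX \<longlonglongrightarrow> 1"
  unfolding XX_def by real_asymp

lemma V_lim: "(\<lambda>k. JJ (XX k) - pi + ln(1 - XX k)) \<longlonglongrightarrow> 4 * ln 2 - pi"
proof -
  have B: "(\<lambda>k. integral {0..pi/2} (\<lambda>t. (1 - sin t)/sqrt(1 - XX k * sin t ^ 2))) \<longlonglongrightarrow> ln 2"
    by (rule B_lim) (use XX_props XX_lim in \<open>auto simp: less_imp_le\<close>)
  have A: "(\<lambda>k. 2*((ln(1+sqrt (XX k)) - ln(sqrt(1-XX k)))/sqrt (XX k)) + ln(1 - XX k)) \<longlonglongrightarrow> 2 * ln 2"
    using lim_A unfolding XX_def .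
  have "(\<lambda>k. (2*((ln(1+sqrt (XX k)) - ln(sqrt(1-XX k)))/sqrt (XX k)) + ln(1 - XX k)) + 2 * integral {0..pi/2} (\<lambda>t. (1 - sin t)/sqrt(1 - XX k * sin t ^ 2)) - pi)
     \<longlonglongrightarrow> 2 * ln 2 + 2 * ln 2 - pi"
    by (intro tendsto_intros A B)
  moreover have "(\<lambda>k. (2*((ln(1+sqrt (XX k)) - ln(sqrt(1-XX k)))/sqrt (XX k)) + ln(1 - XX k)) + 2 * integral {0..pi/2} (\<lambda>t. (1 - sin t)/sqrt(1 - XX k * sin t ^ 2)) - pi)
     = (\<lambda>k. JJ (XX k) - pi + ln(1 - XX k))"
    by (rule ext) (simp add: JJ_split[OF XX_props])
  ultimately show ?thesis by simp
qed

lemma dd_sum: "suminf dd = 4 * ln 2 - pi"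
proof -
  define V where "V = 4 * ln 2 - pi"
  define G where "G = (\<lambda>k. JJ (XX k) - pi + ln(1 - XX k))"
  have GS: "(\<lambda>n. dd n * XX k ^ Suc n) sums G k" for k
    unfolding G_def using G_sums[of "XX k"] XX_props[of k] by simp
  have GL: "G \<longlonglongrightarrow> V" unfolding G_def V_def by (rule V_lim)
  have le1: "suminf dd \<le> G k" for k
  proof -
    have "dd n \<le> dd n * XX k ^ Suc n" for n
    proof -
      have "XX k ^ Suc n \<le> 1" using XX_props[of k] by (intro power_le_one) auto
      hence "dd n * 1 \<le> dd n * XX k ^ Suc n" using dd_nonpos[of n] by (intro mult_left_mono_neg) auto
      thus ?thesis by simp
    qed
    hence "suminf dd \<le> suminf (\<lambda>n. dd n * XX k ^ Suc n)"
      by (intro suminf_le dd_summable sums_summable[OF GS])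
    thus ?thesis using sums_unique[OF GS[of k]] by simp
  qed
  have "suminf dd \<le> V" using GL le1 by (intro LIMSEQ_le_const[OF GL]) auto
  moreover have "V \<le> (\<Sum>n<M. dd n)" for M
  proof -
    have le2: "G k \<le> (\<Sum>n<M. dd n * XX k ^ Suc n)" for k
    proof -
      have nn: "0 \<le> - (dd n * XX k ^ Suc n)" for n
        using dd_nonpos[of n] XX_props[of k] by (simp add: mult_nonpos_nonneg)
      have "(\<Sum>n<M. - (dd n * XX k ^ Suc n)) \<le> suminf (\<lambda>n. - (dd n * XX k ^ Suc n))"
        by (rule sum_le_suminf) (use nn summable_minus[OF sums_summable[OF GS[of k]]] in auto)
      also have "suminf (\<lambda>n. - (dd n * XX k ^ Suc n)) = - G k"
        using sums_unique[OF sums_minus[OF GS[of k]]] by simp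
      finally show ?thesis by (simp add: sum_negf)
    qed
    have "(\<lambda>k. \<Sum>n<M. dd n * XX k ^ Suc n) \<longlonglongrightarrow> (\<Sum>n<M. dd n * 1 ^ Suc n)"
      by (intro tendsto_intros XX_lim)
    hence T: "(\<lambda>k. \<Sum>n<M. dd n * XX k ^ Suc n) \<longlonglongrightarrow> (\<Sum>n<M. dd n)" by simp
    show ?thesis by (rule LIMSEQ_le[OF GL T]) (use le2 in auto)
  qed
  hence "V \<le> suminf dd"
    by (intro LIMSEQ_le_const[OF summable_LIMSEQ[OF dd_summable]]) auto
  ultimately show ?thesis unfolding V_def by simp
qed

theorem mainTheorem11:
  shows "(\<lambda>N::nat. (\<Sum>n=1..N. (real ((2*n) choose n) / 2 ^ (2*n))\<^sup>2)
            - (ln (real N) + (euler_mascheroni + ln 16 - pi)) / pi) \<longlonglongrightarrow> 0"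
proof -
  have ln16: "ln (16::real) = 4 * ln 2"
  proof -
    have "ln ((2::real)^4) = real 4 * ln 2" by (rule ln_realpow)
    thus ?thesis by simp
  qed
  have R: "(\<Sum>n=1..N. (real ((2*n) choose n) / 2 ^ (2*n))\<^sup>2) = ((\<Sum>n<N. dd n) + harm N) / pi" for N
  proof -
    have "(\<Sum>n=1..N. (real ((2*n) choose n) / 2 ^ (2*n))\<^sup>2) = (\<Sum>n=1..N. ca n ^ 2)"
      unfolding ca_def ..
    also have "\<dots> = (\<Sum>n<N. ca (Suc n) ^ 2)" by (rule sum_bounds_lt_plus1[symmetric])
    also have "harm N = (\<Sum>n<N. 1/(real n+1))" unfolding harm_altdef by (simp add: inverse_eq_divide add.commute)
    hence "(\<Sum>n<N. dd n) + harm N = pi * (\<Sum>n<N. ca (Suc n) ^ 2)"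
      unfolding dd_def by (simp add: sum_subtractf sum_distrib_left)
    ultimately show ?thesis by simp
  qed
  have T: "(\<lambda>N. (((\<Sum>n<N. dd n) + (harm N - ln (real N))) - euler_mascheroni - 4 * ln 2 + pi) / pi)
      \<longlonglongrightarrow> ((suminf dd + euler_mascheroni) - euler_mascheroni - 4 * ln 2 + pi) / pi"
    by (intro tendsto_intros summable_LIMSEQ dd_summable euler_mascheroni_LIMSEQ) simp
  have "((suminf dd + euler_mascheroni) - euler_mascheroni - 4 * ln 2 + pi) / pi = 0"
    unfolding dd_sum by simp
  moreover have "(\<lambda>N. (((\<Sum>n<N. dd n) + (harm N - ln (real N))) - euler_mascheroni - 4 * ln 2 + pi) / pi)
     = (\<lambda>N::nat. (\<Sum>n=1..N. (real ((2*n) choose n) / 2 ^ (2*n))\<^sup>2)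
            - (ln (real N) + (euler_mascheroni + ln 16 - pi)) / pi)"
    unfolding R ln16 by (rule ext) (simp add: field_simps)
  ultimately show ?thesis using T by simp
qed

end
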